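(* Assume $\delta_0=0$ and $$\mu(\mathcal M,W):=\tfrac12\sup_{\sigma>0}\frac{\delta_\sigma}{\sigma}<\infty.$$ Then for every $u\in\mathcal M$ with $w=P_Wu$, the estimator $u^*=u^*(w)$ obtained by surrogate model selection satisfies $$\|u-u^*\|\le C\min_{k=1,\dots,K}\|u-u_k^*(w)\|,\qquad C:=2\mu(\mathcal M,W)\kappa.$$ If moreover the family is $\sigma$-admissible for some $\sigma>0$, then $\|u-u^*\|\le C\sigma$.
   Context: Let $V$ be a real Hilbert space with norm $\|\cdot\|$. Let $Y\subset\mathbb R^d$ be compact and let $y\mapsto u(y)$ be a continuous map from $Y$ to $V$. Set $\mathcal M=\{u(y):y\in Y\}$, which is compact. Let $W\subset V$ be a linear subspace of finite dimension $m$, let $P_W$ be the orthogonal projection onto $W$, and let $W^\perp$ be its orthogonal complement. For $w\in W$ put $V_w=w+W^\perp$. For $\sigma\ge 0$ define - $\mathcal M_\sigma=\{v\in V:\operatorname{dist}(v,\mathcal M)\le\sigma\}$; - $\delta_\sigma=\sup\{\|u-v\|: u,v\in\mathcal M_\sigma,\ u-v\in W^\perp\}$. For a finite-dimensional subspace $E\subset V$ let $\mu(E,W)=\sup_{v\in E\setminus\{0\}}\|v\|/\|P_Wv\|$, with the conventions $\mu(\{0\},W)=1$ and $\mu(E,W)=+\infty$ if $E\cap W^\perp\ne\{0\}$. A reduced model family consists of: - sets $\mathcal M_1,\dots,\mathcal M_K$ with $\mathcal M=\bigcup_{k=1}^K\mathcal M_k$; - affine spaces $V_k=\bar u_k+\bar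 V_k$, where $\bar u_k\in V$ and $\bar V_k$ is a linear subspace of dimension $n_k\le m$; - numbers $\varepsilon_k\ge\sup_{u\in\mathcal M_k}\operatorname{dist}(u,V_k)$; - constants $\mu_k=\mu(\bar V_k,W)<\infty$. The family is $\sigma$-admissible if $\mu_k\varepsilon_k\le\sigma$ for all $k$. For $w\in W$ the PBDW estimators are $u_k^*(w)=\operatorname{argmin}\{\operatorname{dist}(v,V_k): v\in V_w\}$, $k=1,\dots,K$ (the minimizer is unique). A surrogate is a function $\mathcal S(\cdot,\mathcal M):V\to[0,\infty)$ with $r\operatorname{dist}(v,\mathcal M)\le\mathcal S(v,\mathcal M)\le R\operatorname{dist}(v,\mathcal M)$ for all $v\in V$, where $0<r\le R$ are constants; set $\kappa=R/r$. Surrogate model selection picks $k^*(w)$ as any minimizer of $k\mapsto\mathcal S(u_k^*(w),\mathcal M)$ over $\{1,\dots,K\}$ and sets $u^*(w)=u^*_{k^*(w)}(w)$. *)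

theory Defs
  imports "HOL-Analysis.Analysis"
begin

definition orth_proj :: "'v::real_inner set \<Rightarrow> 'v \<Rightarrow> 'v" where
  "orth_proj W v = (THE p. p \<in> W \<and> v - p \<in> orthogonal_comp W)"

definition fin_dim_subspace :: "'v::real_vector set \<Rightarrow> bool" where
  "fin_dim_subspace E \<longleftrightarrow> subspace E \<and> (\<exists>B. finite B \<and> E = span B)"

definition nbhd :: "'v::real_normed_vector set \<Rightarrow> real \<Rightarrow> 'v set" where
  "nbhd M \<sigma> = {v. infdist v M \<le> \<sigma>}"

definition delta :: "'v::real_inner set \<Rightarrow> 'v set \<Rightarrow> real \<Rightarrow> real" where
  "delta M W \<sigma> = Sup {norm (u - v) | u v. u \<in> nbhd M \<sigma> \<and> v \<in> nbhd M \<sigma> \<and> u - v \<in> orthogonal_comp W}"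

text \<open>mu(M,W) = 1/2 sup_{sigma>0} delta_sigma / sigma (meaningful when bounded above).\<close>
definition mu_MW :: "'v::real_inner set \<Rightarrow> 'v set \<Rightarrow> real" where
  "mu_MW M W = Sup ((\<lambda>\<sigma>. delta M W \<sigma> / \<sigma>) ` {0<..}) / 2"

definition mu_EW :: "'v::real_inner set \<Rightarrow> 'v set \<Rightarrow> ereal" where
  "mu_EW E W = (if E = {0} then 1
     else if E \<inter> orthogonal_comp W \<noteq> {0} then \<infinity>
     else (SUP v\<in>E - {0}. ereal (norm v / norm (orth_proj W v))))"

definition Vw :: "'v::real_inner set \<Rightarrow> 'v \<Rightarrow> 'v set" where
  "Vw W w = (\<lambda>x. w + x) ` orthogonal_comp W"

definition pbdw :: "'v::real_inner set \<Rightarrow> 'v set \<Rightarrow> 'v \<Rightarrow> 'v" where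
  "pbdw W A w = (THE v. v \<in> Vw W w \<and> (\<forall>v'\<in>Vw W w. infdist v A \<le> infdist v' A))"

end

theory Submission
  imports Defs
begin




lemma GS_step:
  fixes S :: "'a::real_inner set"
  assumes fin: "finite S" and S: "pairwise orthogonal S" and x: "x \<in> span S"
    shows "orthogonal x (a - (\<Sum>b\<in>S. (b \<bullet> a / (b \<bullet> b)) *\<^sub>R b))"
proof -
  have "orthogonal (a - (\<Sum>b\<in>S. (b \<bullet> a / (b \<bullet> b)) *\<^sub>R b)) x"
       if "x \<in> S" for x
  proof -
    have "a \<bullet> x = (\<Sum>y\<in>S. if y = x then y \<bullet> a else 0)"
      by (simp add: fin inner_commute that)
    also have "\<dots> =  (\<Sum>b\<in>S. b \<bullet> a * (b \<bullet> x) / (b \<bullet> b))"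
      apply (rule sum.cong [OF refl], simp)
      by (meson S orthogonal_def pairwise_def that)
   finally show ?thesis
     by (simp add: orthogonal_def algebra_simps inner_sum_left)
  qed
  then show ?thesis
    using orthogonal_to_span orthogonal_commute x by blast
qed

lemma orth_ext_aux:
  fixes S :: "'a::real_inner set"
  assumes "finite T" "finite S" "pairwise orthogonal S"
    shows "\<exists>U. finite U \<and> pairwise orthogonal (S \<union> U) \<and> span (S \<union> U) = span (S \<union> T)"
using assms
proof (induction arbitrary: S)
  case empty then show ?case
    by (metis finite.emptyI sup_bot_right)
next
  case (insert a T)
  have 0: "\<And>x y. \<lbrakk>x \<noteq> y; x \<in> S; y \<in> S\<rbrakk> \<Longrightarrow> x \<bullet> y = 0"
    using insert by (simp add: pairwise_def orthogonal_def)
  define a' where "a' = a - (\<Sum>b\<in>S. (b \<bullet> a / (b \<bullet> b)) *\<^sub>R b)"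
  obtain U where finU: "finite U" and orthU: "pairwise orthogonal (S \<union> insert a' U)"
             and spanU: "span (insert a' S \<union> U) = span (insert a' S \<union> T)"
    by (rule exE [OF insert.IH [of "insert a' S"]])
      (auto simp: GS_step a'_def insert.prems orthogonal_commute
        pairwise_orthogonal_insert span_clauses)
  have "span (S \<union> insert a' U) = span (insert a' (S \<union> T))"
    using spanU by simp
  also have "\<dots> = span (insert a (S \<union> T))"
    by (simp add: a'_def span_neg span_sum span_base span_mul eq_span_insert_eq)
  also have "\<dots> = span (S \<union> insert a T)"
    by simp
  finally show ?case
    using orthU finU by blast
qed


lemma proj_exists:
  fixes E :: "'a::real_inner set"
  assumes "finite B" "E = span B"
  shows "\<exists>p. p \<in> E \<and> x - p \<in> orthogonal_comp E"
proof -
  obtain U where U: "finite U" "pairwise orthogonal U" "span U = span B"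
    using orth_ext_aux[of B "{}"] assms by auto
  let ?p = "\<Sum>b\<in>U. (b \<bullet> x / (b \<bullet> b)) *\<^sub>R b"
  have "?p \<in> span U" by (intro span_sum span_scale span_base) auto
  then have "?p \<in> E" using assms U by simp
  moreover have "x - ?p \<in> orthogonal_comp E"
    unfolding orthogonal_comp_def using GS_step[OF U(1,2)] U(3) assms(2) by auto
  ultimately show ?thesis by blast
qed


lemma perp_inner: "a \<in> E \<Longrightarrow> b \<in> orthogonal_comp E \<Longrightarrow> a \<bullet> b = 0"
  by (auto simp: orthogonal_comp_def orthogonal_def)

lemma perp_inner': "a \<in> E \<Longrightarrow> b \<in> orthogonal_comp E \<Longrightarrow> b \<bullet> a = 0"
  by (auto simp: orthogonal_comp_def orthogonal_def inner_commute)

lemma proj_unique: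
  fixes E :: "'a::real_inner set"
  assumes E: "subspace E" and p: "p \<in> E" "x - p \<in> orthogonal_comp E"
  shows "orth_proj E x = p"
  unfolding orth_proj_def
proof (rule the_equality)
  show "p \<in> E \<and> x - p \<in> orthogonal_comp E" using p by blast
  fix q assume q: "q \<in> E \<and> x - q \<in> orthogonal_comp E"
  have "q - p \<in> E" using q p E by (simp add: subspace_diff)
  moreover have "q - p = (x - p) - (x - q)" by simp
  hence "q - p \<in> orthogonal_comp E" using q p subspace_orthogonal_comp
    by (metis subspace_diff)
  ultimately have "(q - p) \<bullet> (q - p) = 0" using perp_inner by blast
  thus "q = p" by simp
qed

lemma proj_char:
  fixes E :: "'a::real_inner set"
  assumes "fin_dim_subspace E"
  shows "orth_proj E x \<in> E \<and> x - orth_proj E x \<in> orthogonal_comp E"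
proof -
  obtain B where "finite B" "E = span B" "subspace E" using assms by (auto simp: fin_dim_subspace_def)
  then obtain p where "p \<in> E" "x - p \<in> orthogonal_comp E" using proj_exists by blast
  thus ?thesis using proj_unique \<open>subspace E\<close> by metis
qed

lemma proj_in: "fin_dim_subspace E \<Longrightarrow> orth_proj E x \<in> E"
  using proj_char by blast
lemma proj_perp: "fin_dim_subspace E \<Longrightarrow> x - orth_proj E x \<in> orthogonal_comp E"
  using proj_char by blast
lemma fds_subspace: "fin_dim_subspace E \<Longrightarrow> subspace E"
  by (simp add: fin_dim_subspace_def)

lemma proj_add:
  assumes "fin_dim_subspace E"
  shows "orth_proj E (x + y) = orth_proj E x + orth_proj E y"
proof (rule proj_unique)
  show "subspace E" using assms fds_subspace by blast
  show "orth_proj E x + orth_proj E y \<in> E" using assms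
    by (simp add: proj_in fds_subspace subspace_add)
  have "x + y - (orth_proj E x + orth_proj E y) = (x - orth_proj E x) + (y - orth_proj E y)" by simp
  thus "x + y - (orth_proj E x + orth_proj E y) \<in> orthogonal_comp E"
    using assms proj_perp subspace_orthogonal_comp by (metis subspace_add)
qed

lemma proj_scale:
  assumes "fin_dim_subspace E"
  shows "orth_proj E (c *\<^sub>R x) = c *\<^sub>R orth_proj E x"
proof (rule proj_unique)
  show "subspace E" using assms fds_subspace by blast
  show "c *\<^sub>R orth_proj E x \<in> E" using assms
    by (simp add: proj_in fds_subspace subspace_scale)
  have "c *\<^sub>R x - c *\<^sub>R orth_proj E x = c *\<^sub>R (x - orth_proj E x)" by (simp add: algebra_simps)
  thus "c *\<^sub>R x - c *\<^sub>R orth_proj E x \<in> orthogonal_comp E"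
    using assms proj_perp subspace_orthogonal_comp by (metis subspace_scale)
qed

lemma proj_diff:
  assumes "fin_dim_subspace E"
  shows "orth_proj E (x - y) = orth_proj E x - orth_proj E y"
  using proj_add[OF assms, of "x - y" y] by (simp add: algebra_simps)

lemma proj_linear: "fin_dim_subspace E \<Longrightarrow> linear (orth_proj E)"
  by (rule linearI) (simp_all add: proj_add proj_scale)

lemma proj_of_perp:
  assumes "fin_dim_subspace E" "x \<in> orthogonal_comp E"
  shows "orth_proj E x = 0"
  by (rule proj_unique) (use assms fds_subspace subspace_0 in auto)

lemma proj_of_in:
  assumes "fin_dim_subspace E" "x \<in> E"
  shows "orth_proj E x = x"
  by (rule proj_unique) (use assms fds_subspace subspace_orthogonal_comp subspace_0 in auto)

lemma perp_of_proj0: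
  assumes "fin_dim_subspace E" "orth_proj E x = 0"
  shows "x \<in> orthogonal_comp E"
  using proj_perp[OF assms(1), of x] assms(2) by simp

lemma pyth_perp:
  assumes "a \<in> E" "b \<in> orthogonal_comp E"
  shows "(norm (a + b))\<^sup>2 = (norm a)\<^sup>2 + (norm b)\<^sup>2"
  using assms norm_add_Pythagorean perp_inner unfolding orthogonal_def by blast

lemma proj_pyth:
  assumes "fin_dim_subspace E"
  shows "(norm x)\<^sup>2 = (norm (orth_proj E x))\<^sup>2 + (norm (x - orth_proj E x))\<^sup>2"
  using pyth_perp[OF proj_in[OF assms] proj_perp[OF assms], of x x] by simp

lemma proj_norm_le:
  assumes "fin_dim_subspace E"
  shows "norm (orth_proj E x) \<le> norm x"
  using proj_pyth[OF assms, of x]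
  by (metis le_add_same_cancel1 norm_ge_zero power2_le_imp_le zero_le_power2)

lemma perp_norm_le:
  assumes "fin_dim_subspace E"
  shows "norm (x - orth_proj E x) \<le> norm x"
  using proj_pyth[OF assms, of x]
  by (metis le_add_same_cancel2 norm_ge_zero power2_le_imp_le zero_le_power2)





lemma cs_ineq: fixes mu t g :: real shows "(mu * t + g)\<^sup>2 \<le> (1 + mu\<^sup>2) * (t\<^sup>2 + g\<^sup>2)"
proof -
  have "0 \<le> (mu * g - t)\<^sup>2" by simp
  moreover have "(1 + mu\<^sup>2) * (t\<^sup>2 + g\<^sup>2) - (mu * t + g)\<^sup>2 = (mu * g - t)\<^sup>2"
    by (simp add: power2_eq_square algebra_simps)
  ultimately show ?thesis by linarith
qed

lemma real_ineq1:
  fixes s t g mu b :: real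
  assumes "0 \<le> t" "0 \<le> g" "0 \<le> b" "b \<le> mu * t" "s \<le> b + g" "0 \<le> s"
  shows "s\<^sup>2 / (1 + mu\<^sup>2) \<le> t\<^sup>2 + g\<^sup>2"
proof -
  have "s \<le> mu * t + g" using assms by linarith
  hence "s\<^sup>2 \<le> (mu * t + g)\<^sup>2" using assms by (intro power_mono) auto
  also have "\<dots> \<le> (1 + mu\<^sup>2) * (t\<^sup>2 + g\<^sup>2)" by (rule cs_ineq)
  finally have "s\<^sup>2 \<le> (1 + mu\<^sup>2) * (t\<^sup>2 + g\<^sup>2)" .
  moreover have "0 < 1 + mu\<^sup>2" by (metis add_pos_nonneg zero_le_power2 zero_less_one)
  ultimately show ?thesis by (metis divide_le_eq mult.commute)
qed

lemma real_ineq2: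
  fixes A b X d mu :: real
  assumes "0 \<le> A" "0 \<le> b" "0 \<le> X" "0 \<le> d" "A\<^sup>2 + X\<^sup>2 = d\<^sup>2" "b\<^sup>2 \<le> (mu\<^sup>2 - 1) * X\<^sup>2" "1 \<le> mu"
  shows "A + b \<le> mu * d"
proof -
  define k where "k = mu\<^sup>2 - 1"
  have "1 \<le> mu\<^sup>2" using assms(7) by (simp add: one_le_power)
  hence k: "0 \<le> k" by (simp add: k_def)
  have "b \<le> sqrt (k * X\<^sup>2)" using assms(6) by (simp add: k_def real_le_rsqrt)
  hence bk: "b \<le> sqrt k * X" using assms(3) k by (simp add: real_sqrt_mult)
  have sk: "(sqrt k)\<^sup>2 = k" using k by simp
  have "(sqrt k * X + A)\<^sup>2 \<le> (1 + (sqrt k)\<^sup>2) * (X\<^sup>2 + A\<^sup>2)" by (rule cs_ineq)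
  also have "(1 + (sqrt k)\<^sup>2) * (X\<^sup>2 + A\<^sup>2) = mu\<^sup>2 * d\<^sup>2"
    using assms(5) sk unfolding k_def by (simp add: add.commute)
  also have "mu\<^sup>2 * d\<^sup>2 = (mu * d)\<^sup>2" by (simp add: power_mult_distrib)
  finally have sq: "(sqrt k * X + A)\<^sup>2 \<le> (mu * d)\<^sup>2" .
  have "0 \<le> mu * d" using assms(4,7) by simp
  hence "sqrt k * X + A \<le> mu * d" using power2_le_imp_le[OF sq] by blast
  thus ?thesis using bk by linarith
qed



lemma mu_bound:
  fixes V W :: "'v::real_inner set"
  assumes W: "fin_dim_subspace W" and V: "subspace V" and fin: "mu_EW V W < \<infinity>"
  shows "\<exists>mu. mu_EW V W = ereal mu \<and> 1 \<le> mu \<and> (\<forall>e\<in>V. norm e \<le> mu * norm (orth_proj W e))"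
proof (cases "V = {0}")
  case True
  thus ?thesis by (auto simp: mu_EW_def intro!: exI[of _ 1])
next
  case False
  have inter: "V \<inter> orthogonal_comp W = {0}"
    using fin False by (auto simp: mu_EW_def split: if_splits)
  define s where "s = (SUP v\<in>V - {0}. ereal (norm v / norm (orth_proj W v)))"
  have s: "mu_EW V W = s" using False inter by (simp add: mu_EW_def s_def)
  have Pnz: "orth_proj W e \<noteq> 0" if "e \<in> V" "e \<noteq> 0" for e
  proof
    assume "orth_proj W e = 0"
    hence "e \<in> orthogonal_comp W" using perp_of_proj0[OF W] by blast
    thus False using inter that by blast
  qed
  have rat_ge1: "1 \<le> norm e / norm (orth_proj W e)" if "e \<in> V" "e \<noteq> 0" for e
  proof -
    have "0 < norm (orth_proj W e)" using Pnz[OF that] by simp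
    thus ?thesis using proj_norm_le[OF W, of e] by (simp add: le_divide_eq_1_pos)
  qed
  have le: "ereal (norm e / norm (orth_proj W e)) \<le> s" if "e \<in> V" "e \<noteq> 0" for e
    unfolding s_def using that by (intro SUP_upper) auto
  obtain v0 where v0: "v0 \<in> V" "v0 \<noteq> 0" using False V subspace_0 by blast
  have "ereal 1 \<le> ereal (norm v0 / norm (orth_proj W v0))" using rat_ge1[OF v0] by simp
  hence "ereal 1 \<le> s" using le[OF v0] by (rule order_trans)
  moreover have "s < \<infinity>" using fin s by simp
  ultimately obtain mu where mu: "s = ereal mu" "1 \<le> mu"
  proof (cases s)
    case (real r) thus ?thesis using that \<open>ereal 1 \<le> s\<close> by simp
  qed (use \<open>s < \<infinity>\<close> \<open>ereal 1 \<le> s\<close> in auto)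
  have "norm e \<le> mu * norm (orth_proj W e)" if "e \<in> V" for e
  proof (cases "e = 0")
    case True thus ?thesis using mu by simp
  next
    case False
    have "norm e / norm (orth_proj W e) \<le> mu" using le[OF that False] mu by simp
    moreover have "0 < norm (orth_proj W e)" using Pnz[OF that False] by simp
    ultimately show ?thesis by (simp add: divide_le_eq)
  qed
  thus ?thesis using s mu by blast
qed



lemma Vw_char:
  assumes W: "fin_dim_subspace W" and w: "w \<in> W" and x: "x \<in> Vw W w"
  shows "orth_proj W x = w \<and> x - w \<in> orthogonal_comp W"
proof -
  obtain t where t: "t \<in> orthogonal_comp W" "x = w + t" using x by (auto simp: Vw_def)
  have "orth_proj W x = orth_proj W w + orth_proj W t" using t proj_add[OF W] by simp
  also have "\<dots> = w" using proj_of_in[OF W w] proj_of_perp[OF W t(1)] by simp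
  finally show ?thesis using t by simp
qed

lemma Vw_intro:
  assumes "x - w \<in> orthogonal_comp W"
  shows "x \<in> Vw W w"
  unfolding Vw_def using assms by (intro image_eqI[of _ _ "x - w"]) auto

lemma fds_image:
  assumes W: "fin_dim_subspace W" and V: "fin_dim_subspace V"
  shows "fin_dim_subspace (orth_proj W ` V)"
proof -
  obtain B where B: "finite B" "V = span B" using V by (auto simp: fin_dim_subspace_def)
  have lin: "linear (orth_proj W)" by (rule proj_linear[OF W])
  have "orth_proj W ` V = span (orth_proj W ` B)" using B(2) span_linear_image[OF lin] by simp
  moreover have "subspace (orth_proj W ` V)"
    using \<open>orth_proj W ` V = span (orth_proj W ` B)\<close> by (simp add: subspace_span)
  ultimately show ?thesis using B(1) by (auto simp: fin_dim_subspace_def)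
qed


lemma pbdw_main:
  fixes W V :: "'v::real_inner set"
  assumes W: "fin_dim_subspace W" and V: "fin_dim_subspace V"
    and mu1: "1 \<le> mu" and mub: "\<And>e. e \<in> V \<Longrightarrow> norm e \<le> mu * norm (orth_proj W e)"
    and w: "w \<in> W"
  shows "pbdw W ((\<lambda>z. ub + z) ` V) w \<in> Vw W w \<and>
    (\<forall>x\<in>Vw W w. \<forall>a\<in>(\<lambda>z. ub + z) ` V. norm (x - pbdw W ((\<lambda>z. ub + z) ` V) w) \<le> mu * norm (x - a))"
proof -
  define A where "A = (\<lambda>z. ub + z) ` V"
  define P where "P = orth_proj W"
  define Z where "Z = P ` V"
  have Vs: "subspace V" using V fds_subspace by blast
  have Ws: "subspace W" using W fds_subspace by blast
  have Z: "fin_dim_subspace Z" unfolding Z_def P_def using fds_image[OF W V] .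
  have Zs: "subspace Z" using Z fds_subspace by blast
  have Padd: "P (a + b) = P a + P b" for a b unfolding P_def using proj_add[OF W] .
  have Pdiff: "P (a - b) = P a - P b" for a b unfolding P_def using proj_diff[OF W] .
  have PW: "P a \<in> W" for a unfolding P_def using proj_in[OF W] .
  have Pperp: "a - P a \<in> orthogonal_comp W" for a unfolding P_def using proj_perp[OF W] .
  define q where "q = orth_proj Z (w - P ub)"
  have "q \<in> Z" unfolding q_def using proj_in[OF Z] .
  then obtain e0 where e0: "e0 \<in> V" "P e0 = q" unfolding Z_def by blast
  define a0 where "a0 = ub + e0"
  define g where "g = w - P a0"
  have gZ: "g \<in> orthogonal_comp Z"
  proof -
    have "g = (w - P ub) - q" unfolding g_def a0_def using Padd e0 by simp
    thus ?thesis unfolding q_def using proj_perp[OF Z] by simp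
  qed
  have gW: "g \<in> W" unfolding g_def using w PW Ws by (simp add: subspace_diff)
  define v0 where "v0 = a0 + g"
  define m where "m = norm g"
  have a0A: "a0 \<in> A" unfolding A_def a0_def using e0 by blast
  have Ane: "A \<noteq> {}" using a0A by blast
  have v0V: "v0 \<in> Vw W w"
  proof (rule Vw_intro)
    have "v0 - w = a0 - P a0" unfolding v0_def g_def by simp
    thus "v0 - w \<in> orthogonal_comp W" using Pperp by simp
  qed
  have Adec: "\<exists>e\<in>V. a = a0 + e" if aA: "a \<in> A" for a
  proof -
    obtain e' where "e' \<in> V" "a = ub + e'" using aA unfolding A_def by blast
    thus ?thesis using e0 Vs unfolding a0_def
      by (intro bexI[of _ "e' - e0"]) (auto simp: subspace_diff)
  qed
  have key: "(norm (g - P e))\<^sup>2 = m\<^sup>2 + (norm (P e))\<^sup>2" if "e \<in> V" for e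
  proof -
    have "P e \<in> Z" unfolding Z_def using that by blast
    hence "- P e \<in> Z" using Zs by (rule subspace_neg[rotated])
    from pyth_perp[OF this gZ] have "(norm (- P e + g))\<^sup>2 = (norm (- P e))\<^sup>2 + (norm g)\<^sup>2" .
    moreover have "- P e + g = g - P e" by simp
    ultimately show ?thesis unfolding m_def by simp
  qed
  have xchar: "P x = w \<and> x - w \<in> orthogonal_comp W" if "x \<in> Vw W w" for x
    using Vw_char[OF W w that] unfolding P_def .
  have Pxa: "P (x - (a0 + e)) = g - P e" if "x \<in> Vw W w" for x e
    using xchar[OF that] unfolding g_def by (simp add: Pdiff Padd)
  have lower: "m \<le> infdist x A" if "x \<in> Vw W w" for x
  proof -
    have "m \<le> dist x a" if aA: "a \<in> A" for a
    proof -
      obtain e where e: "e \<in> V" "a = a0 + e" using Adec[OF aA] by blast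
      have "m\<^sup>2 \<le> (norm (g - P e))\<^sup>2" using key[OF e(1)] by simp
      hence "m \<le> norm (g - P e)" using power2_le_imp_le norm_ge_zero by blast
      also have "\<dots> = norm (P (x - a))" using Pxa[OF \<open>x \<in> Vw W w\<close>] e by simp
      also have "\<dots> \<le> norm (x - a)" unfolding P_def by (rule proj_norm_le[OF W])
      finally show ?thesis by (simp add: dist_norm)
    qed
    thus ?thesis unfolding infdist_notempty[OF Ane] by (rule cINF_greatest[OF Ane])
  qed
  have v0d: "infdist v0 A \<le> m"
    using infdist_le[OF a0A, of v0] unfolding m_def v0_def by (simp add: dist_norm)
  have uniq: "x = v0" if x: "x \<in> Vw W w" and le: "infdist x A \<le> infdist v0 A" for x
  proof -
    define c where "c = x - v0"
    have cW: "c \<in> orthogonal_comp W"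
    proof -
      have "c = (x - w) - (v0 - w)" unfolding c_def by simp
      thus ?thesis using xchar[OF x] xchar[OF v0V] subspace_orthogonal_comp
        by (metis subspace_diff)
    qed
    define s where "s = norm c"
    define Q where "Q = m\<^sup>2 + s\<^sup>2 / (1 + mu\<^sup>2)"
    have "sqrt Q \<le> dist x a" if aA: "a \<in> A" for a
    proof -
      obtain e where e: "e \<in> V" "a = a0 + e" using Adec[OF aA] by blast
      define \<gamma> where "\<gamma> = norm (c - (e - P e))"
      have dec: "x - a = (g - P e) + (c - (e - P e))"
        unfolding c_def v0_def e(2) by simp
      have "g - P e \<in> W" using gW PW Ws by (simp add: subspace_diff)
      moreover have "c - (e - P e) \<in> orthogonal_comp W"
        using cW Pperp subspace_orthogonal_comp by (metis subspace_diff)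
      ultimately have "(norm (x - a))\<^sup>2 = (norm (g - P e))\<^sup>2 + \<gamma>\<^sup>2"
        unfolding dec \<gamma>_def by (rule pyth_perp)
      also have "\<dots> = m\<^sup>2 + (norm (P e))\<^sup>2 + \<gamma>\<^sup>2" using key[OF e(1)] by simp
      finally have eq: "(norm (x - a))\<^sup>2 = m\<^sup>2 + (norm (P e))\<^sup>2 + \<gamma>\<^sup>2" .
      have b1: "norm (e - P e) \<le> mu * norm (P e)"
        using perp_norm_le[OF W, of e] mub[OF e(1)] unfolding P_def by linarith
      have b2: "s \<le> norm (e - P e) + \<gamma>"
        unfolding s_def \<gamma>_def using norm_triangle_ineq[of "e - P e" "c - (e - P e)"] by simp
      have "s\<^sup>2 / (1 + mu\<^sup>2) \<le> (norm (P e))\<^sup>2 + \<gamma>\<^sup>2"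
        by (rule real_ineq1[OF _ _ _ b1 b2]) (auto simp: \<gamma>_def s_def)
      hence "Q \<le> (norm (x - a))\<^sup>2" unfolding Q_def eq by linarith
      hence "sqrt Q \<le> sqrt ((norm (x - a))\<^sup>2)" by (rule real_sqrt_le_mono)
      thus ?thesis by (simp add: dist_norm)
    qed
    hence "sqrt Q \<le> infdist x A" unfolding infdist_notempty[OF Ane] by (rule cINF_greatest[OF Ane])
    hence sq: "sqrt Q \<le> m" using le v0d by linarith
    have Q0: "0 \<le> Q" unfolding Q_def by (simp add: add_nonneg_nonneg)
    have "Q = (sqrt Q)\<^sup>2" using Q0 by simp
    also have "\<dots> \<le> m\<^sup>2" using sq Q0 by (intro power_mono) auto
    finally have "s\<^sup>2 / (1 + mu\<^sup>2) \<le> 0" unfolding Q_def by simp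
    moreover have "0 < 1 + mu\<^sup>2" by (metis add_pos_nonneg zero_le_power2 zero_less_one)
    ultimately have "s\<^sup>2 \<le> 0" by (simp add: divide_le_0_iff)
    hence "s = 0" by simp
    thus ?thesis unfolding s_def c_def by simp
  qed
  have pe: "pbdw W A w = v0"
    unfolding pbdw_def
  proof (rule the_equality)
    show "v0 \<in> Vw W w \<and> (\<forall>v'\<in>Vw W w. infdist v0 A \<le> infdist v' A)"
      using v0V v0d lower by fastforce
    show "v = v0" if "v \<in> Vw W w \<and> (\<forall>v'\<in>Vw W w. infdist v A \<le> infdist v' A)" for v
      using that v0V uniq by blast
  qed
  have est: "norm (x - v0) \<le> mu * norm (x - a)" if x: "x \<in> Vw W w" and a: "a \<in> A" for x a
  proof -
    obtain e where e: "e \<in> V" "a = a0 + e" using Adec[OF a] by blast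
    define \<eta> where "\<eta> = x - a"
    have Peta: "P \<eta> = g - P e" unfolding \<eta>_def e(2) using Pxa[OF x] .
    have "x - v0 = (\<eta> - (g - P e)) + (e - P e)"
      unfolding \<eta>_def v0_def e(2) by simp
    hence dec: "x - v0 = (\<eta> - P \<eta>) + (e - P e)" using Peta by simp
    have PePeta: "norm (P e) \<le> norm (P \<eta>)"
    proof -
      have "P e \<bullet> g = 0"
        using gZ unfolding Z_def using e(1) perp_inner by blast
      hence "(norm (P e))\<^sup>2 = P e \<bullet> (- P \<eta>)" using Peta
        by (simp add: power2_norm_eq_inner inner_diff_right)
      also have "\<dots> \<le> norm (P e) * norm (- P \<eta>)" by (rule norm_cauchy_schwarz)
      finally have "norm (P e) * norm (P e) \<le> norm (P e) * norm (P \<eta>)"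
        by (simp add: power2_eq_square)
      thus ?thesis
        by (metis mult_le_cancel_left norm_ge_zero order.trans not_le order_le_less)
    qed
    have p1: "(norm \<eta>)\<^sup>2 = (norm (P \<eta>))\<^sup>2 + (norm (\<eta> - P \<eta>))\<^sup>2"
      unfolding P_def by (rule proj_pyth[OF W])
    have p2: "(norm e)\<^sup>2 = (norm (P e))\<^sup>2 + (norm (e - P e))\<^sup>2"
      unfolding P_def by (rule proj_pyth[OF W])
    have "(norm e)\<^sup>2 \<le> (mu * norm (P e))\<^sup>2"
      using mub[OF e(1)] unfolding P_def by (intro power_mono) auto
    hence "(norm (e - P e))\<^sup>2 \<le> (mu\<^sup>2 - 1) * (norm (P e))\<^sup>2"
      using p2 by (simp add: power_mult_distrib algebra_simps)
    also have "\<dots> \<le> (mu\<^sup>2 - 1) * (norm (P \<eta>))\<^sup>2"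
    proof (rule mult_left_mono)
      show "(norm (P e))\<^sup>2 \<le> (norm (P \<eta>))\<^sup>2" using PePeta by (intro power_mono) auto
      have "1 \<le> mu\<^sup>2" using mu1 by (simp add: one_le_power)
      thus "0 \<le> mu\<^sup>2 - 1" by simp
    qed
    finally have bb: "(norm (e - P e))\<^sup>2 \<le> (mu\<^sup>2 - 1) * (norm (P \<eta>))\<^sup>2" .
    have "norm (x - v0) \<le> norm (\<eta> - P \<eta>) + norm (e - P e)"
      unfolding dec by (rule norm_triangle_ineq)
    also have "\<dots> \<le> mu * norm \<eta>"
      by (rule real_ineq2[OF _ _ _ _ _ bb mu1]) (use p1 in auto)
    finally show ?thesis unfolding \<eta>_def .
  qed
  show ?thesis using pe v0V est unfolding A_def by simp
qed





theorem theorem3p4: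
  fixes Y :: "(real ^ 'd) set"
    and u :: "real ^ 'd \<Rightarrow> 'v::{real_inner, complete_space}"
    and W :: "'v set"
    and K :: nat
    and Mk :: "nat \<Rightarrow> 'v set"
    and ubar :: "nat \<Rightarrow> 'v"
    and barV :: "nat \<Rightarrow> 'v set"
    and eps :: "nat \<Rightarrow> real"
    and S :: "'v \<Rightarrow> real"
    and r R :: real
    and y :: "real ^ 'd"
    and kstar :: nat
  assumes Y: "compact Y" "continuous_on Y u"
    and W: "fin_dim_subspace W"
    and K: "K \<ge> 1"
    and cover: "u ` Y = (\<Union>k\<in>{1..K}. Mk k)"
    and Vk: "\<And>k. k \<in> {1..K} \<Longrightarrow> fin_dim_subspace (barV k) \<and> dim (barV k) \<le> dim W"
    and epsk: "\<And>k x. k \<in> {1..K} \<Longrightarrow> x \<in> Mk k \<Longrightarrow>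
                 infdist x ((\<lambda>z. ubar k + z) ` barV k) \<le> eps k"
    and muk: "\<And>k. k \<in> {1..K} \<Longrightarrow> mu_EW (barV k) W < \<infinity>"
    and surr: "0 < r" "r \<le> R"
      "\<And>v. r * infdist v (u ` Y) \<le> S v \<and> S v \<le> R * infdist v (u ` Y)"
    and delta0: "delta (u ` Y) W 0 = 0"
    and muMW: "bdd_above ((\<lambda>\<sigma>. delta (u ` Y) W \<sigma> / \<sigma>) ` {0<..})"
    and y: "y \<in> Y"
    and kstar: "kstar \<in> {1..K}"
      "\<And>k. k \<in> {1..K} \<Longrightarrow>
         S (pbdw W ((\<lambda>z. ubar kstar + z) ` barV kstar) (orth_proj W (u y)))
         \<le> S (pbdw W ((\<lambda>z. ubar k + z) ` barV k) (orth_proj W (u y)))"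
  shows "norm (u y - pbdw W ((\<lambda>z. ubar kstar + z) ` barV kstar) (orth_proj W (u y)))
           \<le> (2 * mu_MW (u ` Y) W * (R / r)) *
             Min ((\<lambda>k. norm (u y - pbdw W ((\<lambda>z. ubar k + z) ` barV k) (orth_proj W (u y)))) ` {1..K})
       \<and> (\<forall>\<sigma>>0. (\<forall>k\<in>{1..K}. mu_EW (barV k) W * ereal (eps k) \<le> ereal \<sigma>) \<longrightarrow>
            norm (u y - pbdw W ((\<lambda>z. ubar kstar + z) ` barV kstar) (orth_proj W (u y)))
              \<le> (2 * mu_MW (u ` Y) W * (R / r)) * \<sigma>)"

proof -
  define M where "M = u ` Y"
  define uy where "uy = u y"
  have Mc: "compact M" unfolding M_def using Y by (rule compact_continuous_image[rotated])
  have uyM: "uy \<in> M" unfolding M_def uy_def using y by blast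
  have Mne: "M \<noteq> {}" using uyM by blast
  obtain b where b: "\<And>x. x \<in> M \<Longrightarrow> norm x \<le> b"
    using compact_imp_bounded[OF Mc] unfolding bounded_iff by blast
  have nbn: "norm v \<le> \<sigma> + 1 + b" if "v \<in> nbhd M \<sigma>" for v \<sigma>
  proof -
    have inf: "infdist v M \<le> \<sigma>" using that by (simp add: nbhd_def)
    have "\<exists>a\<in>M. dist v a < \<sigma> + 1"
    proof (rule ccontr)
      assume "\<not> ?thesis"
      hence "\<And>a. a \<in> M \<Longrightarrow> \<sigma> + 1 \<le> dist v a" by (simp add: not_less)
      hence "\<sigma> + 1 \<le> infdist v M" unfolding infdist_notempty[OF Mne] by (rule cINF_greatest[OF Mne])
      thus False using inf by linarith
    qed
    then obtain a where a: "a \<in> M" "dist v a < \<sigma> + 1" by blast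
    have "norm v \<le> dist v a + norm a" unfolding dist_norm using norm_triangle_ineq[of "v - a" a] by simp
    thus ?thesis using a b[OF a(1)] by linarith
  qed
  have delta_le: "norm (p - q) \<le> delta M W \<sigma>"
    if "p \<in> nbhd M \<sigma>" "q \<in> nbhd M \<sigma>" "p - q \<in> orthogonal_comp W" for p q \<sigma>
    unfolding delta_def
  proof (rule cSup_upper)
    show "norm (p - q) \<in> {norm (u - v) |u v. u \<in> nbhd M \<sigma> \<and> v \<in> nbhd M \<sigma> \<and> u - v \<in> orthogonal_comp W}"
      using that by blast
    show "bdd_above {norm (u - v) |u v. u \<in> nbhd M \<sigma> \<and> v \<in> nbhd M \<sigma> \<and> u - v \<in> orthogonal_comp W}"
    proof (rule bdd_aboveI)
      fix z assume "z \<in> {norm (u - v) |u v. u \<in> nbhd M \<sigma> \<and> v \<in> nbhd M \<sigma> \<and> u - v \<in> orthogonal_comp W}"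
      then obtain p' q' where pq: "z = norm (p' - q')" "p' \<in> nbhd M \<sigma>" "q' \<in> nbhd M \<sigma>" by blast
      have "norm (p' - q') \<le> norm p' + norm q'" by (rule norm_triangle_ineq4)
      thus "z \<le> (\<sigma> + 1 + b) + (\<sigma> + 1 + b)" using pq nbn[OF pq(2)] nbn[OF pq(3)] by linarith
    qed
  qed
  define mu where "mu = mu_MW M W"
  have ratio: "delta M W \<sigma> / \<sigma> \<le> 2 * mu" if "0 < \<sigma>" for \<sigma>
  proof -
    have "delta M W \<sigma> / \<sigma> \<le> Sup ((\<lambda>\<sigma>. delta M W \<sigma> / \<sigma>) ` {0<..})"
      using muMW that unfolding M_def by (intro cSup_upper) auto
    thus ?thesis unfolding mu_def mu_MW_def by simp
  qed
  have mainb: "norm (p - q) \<le> 2 * mu * \<sigma>"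
    if "0 \<le> \<sigma>" "p \<in> nbhd M \<sigma>" "q \<in> nbhd M \<sigma>" "p - q \<in> orthogonal_comp W" for p q \<sigma>
  proof (cases "\<sigma> = 0")
    case True thus ?thesis using delta_le[OF that(2-4)] delta0 unfolding M_def by simp
  next
    case False
    hence s: "0 < \<sigma>" using that(1) by simp
    have "delta M W \<sigma> \<le> 2 * mu * \<sigma>" using ratio[OF s] s by (simp add: divide_le_eq)
    thus ?thesis using delta_le[OF that(2-4)] by linarith
  qed
  have uynb: "uy \<in> nbhd M \<sigma>" if "0 \<le> \<sigma>" for \<sigma> using uyM that by (simp add: nbhd_def)
  have mu0: "0 \<le> mu"
  proof -
    have z: "uy - uy \<in> orthogonal_comp W" using subspace_0[OF subspace_orthogonal_comp[of W]] by simp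
    have u1: "uy \<in> nbhd M 1" by (rule uynb) simp
    have "norm (uy - uy) \<le> delta M W 1"
      by (rule delta_le[OF u1 u1 z])
    thus ?thesis using ratio[of 1] by simp
  qed
  define w where "w = orth_proj W uy"
  have wW: "w \<in> W" unfolding w_def using proj_in[OF W] .
  have uyV: "uy \<in> Vw W w" unfolding w_def using proj_perp[OF W] by (intro Vw_intro)
  define A where "A = (\<lambda>k. (\<lambda>z. ubar k + z) ` barV k)"
  define v where "v = (\<lambda>k. pbdw W (A k) w)"
  have kinfo: "\<exists>m. mu_EW (barV k) W = ereal m \<and> v k \<in> Vw W w \<and>
      (\<forall>a\<in>A k. norm (uy - v k) \<le> m * norm (uy - a))" if k: "k \<in> {1..K}" for k
  proof -
    have Vk': "fin_dim_subspace (barV k)" using Vk[OF k] by blast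
    obtain m where m: "mu_EW (barV k) W = ereal m" "1 \<le> m"
      "\<forall>e\<in>barV k. norm e \<le> m * norm (orth_proj W e)"
      using mu_bound[OF W fds_subspace[OF Vk'] muk[OF k]] by blast
    have "pbdw W ((\<lambda>z. ubar k + z) ` barV k) w \<in> Vw W w \<and>
      (\<forall>x\<in>Vw W w. \<forall>a\<in>(\<lambda>z. ubar k + z) ` barV k. norm (x - pbdw W ((\<lambda>z. ubar k + z) ` barV k) w) \<le> m * norm (x - a))"
      using m by (intro pbdw_main[OF W Vk' m(2) _ wW]) auto
    thus ?thesis using m uyV unfolding v_def A_def by blast
  qed
  have vV: "v k \<in> Vw W w" if "k \<in> {1..K}" for k using kinfo[OF that] by blast
  have diffperp: "uy - v k \<in> orthogonal_comp W" if "k \<in> {1..K}" for k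
  proof -
    have "uy - v k = (uy - w) - (v k - w)" by simp
    thus ?thesis using Vw_char[OF W wW uyV] Vw_char[OF W wW vV[OF that]] subspace_orthogonal_comp
      by (metis subspace_diff)
  qed
  define C where "C = 2 * mu * (R / r)"
  have C0: "0 \<le> C" unfolding C_def using mu0 surr by simp
  have part1k: "norm (uy - v kstar) \<le> C * norm (uy - v k)" if k: "k \<in> {1..K}" for k
  proof -
    define s where "s = infdist (v kstar) M"
    have s0: "0 \<le> s" unfolding s_def by (rule infdist_nonneg)
    have "norm (uy - v kstar) \<le> 2 * mu * s"
      by (rule mainb[OF s0 uynb[OF s0] _ diffperp[OF kstar(1)]]) (simp add: nbhd_def s_def)
    moreover have "r * s \<le> R * norm (uy - v k)"
    proof -
      have "r * s \<le> S (v kstar)" using surr(3)[of "v kstar"] unfolding s_def M_def by simp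
      also have "\<dots> \<le> S (v k)" using kstar(2)[OF k] unfolding v_def A_def w_def uy_def by simp
      also have "\<dots> \<le> R * infdist (v k) M" using surr(3)[of "v k"] unfolding M_def by simp
      also have "\<dots> \<le> R * norm (uy - v k)"
        using infdist_le[OF uyM, of "v k"] surr(1,2) by (simp add: dist_norm norm_minus_commute)
      finally show ?thesis .
    qed
    hence "s \<le> (R / r) * norm (uy - v k)" using surr(1) by (simp add: field_simps)
    hence "2 * mu * s \<le> 2 * mu * ((R / r) * norm (uy - v k))" using mu0 by (intro mult_left_mono) auto
    ultimately show ?thesis unfolding C_def by (simp add: mult.assoc)
  qed
  have fin: "finite ((\<lambda>k. norm (uy - v k)) ` {1..K})" by simp
  have ne: "(\<lambda>k. norm (uy - v k)) ` {1..K} \<noteq> {}" using K by simp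
  obtain k1 where k1: "k1 \<in> {1..K}" "Min ((\<lambda>k. norm (uy - v k)) ` {1..K}) = norm (uy - v k1)"
    using Min_in[OF fin ne] by auto
  have part1: "norm (uy - v kstar) \<le> C * Min ((\<lambda>k. norm (uy - v k)) ` {1..K})"
    using part1k[OF k1(1)] k1(2) by simp
  have part2: "norm (uy - v kstar) \<le> C * \<sigma>"
    if s: "0 < \<sigma>" and hyp: "\<forall>k\<in>{1..K}. mu_EW (barV k) W * ereal (eps k) \<le> ereal \<sigma>" for \<sigma>
  proof -
    obtain k0 where k0: "k0 \<in> {1..K}" "uy \<in> Mk k0" using uyM cover unfolding M_def by blast
    obtain m where m: "mu_EW (barV k0) W = ereal m" "\<forall>a\<in>A k0. norm (uy - v k0) \<le> m * norm (uy - a)"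
      using kinfo[OF k0(1)] by blast
    have Vk': "fin_dim_subspace (barV k0)" using Vk[OF k0(1)] by blast
    have m1: "1 \<le> m" using mu_bound[OF W fds_subspace[OF Vk'] muk[OF k0(1)]] m(1) by auto
    have "mu_EW (barV k0) W * ereal (eps k0) \<le> ereal \<sigma>" using hyp k0(1) by blast
    hence "ereal (m * eps k0) \<le> ereal \<sigma>" using m(1) by simp
    hence me: "m * eps k0 \<le> \<sigma>" by simp
    have Ane: "A k0 \<noteq> {}" unfolding A_def using subspace_0[OF fds_subspace[OF Vk']] by blast
    have "norm (uy - v k0) / m \<le> dist uy a" if "a \<in> A k0" for a
      using m(2) that m1 by (simp add: divide_le_eq dist_norm mult.commute)
    hence "norm (uy - v k0) / m \<le> infdist uy (A k0)"
      unfolding infdist_notempty[OF Ane] by (rule cINF_greatest[OF Ane])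
    also have "\<dots> \<le> eps k0" using epsk[OF k0] unfolding A_def by simp
    finally have "norm (uy - v k0) \<le> m * eps k0" using m1 by (simp add: divide_le_eq mult.commute)
    hence "norm (uy - v k0) \<le> \<sigma>" using me by linarith
    hence "Min ((\<lambda>k. norm (uy - v k)) ` {1..K}) \<le> \<sigma>"
      using Min_le[OF fin] k0(1) by (meson image_eqI order_trans)
    hence "C * Min ((\<lambda>k. norm (uy - v k)) ` {1..K}) \<le> C * \<sigma>" using C0 by (rule mult_left_mono)
    thus ?thesis using part1 by linarith
  qed
  show ?thesis using part1 part2 unfolding C_def mu_def v_def A_def w_def uy_def M_def by blast
qed


end
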